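(* Every consistent normal modal logic $\Lambda$ is of exactly one of the following types: Type A: $F_\circ\models\Lambda$; Type B: $F_\bullet\models\Lambda$ and $\Lambda\vdash\Box^n\bot$ for some $n\ge 1$; Type C: $F_\bullet\models\Lambda$, $\Lambda\not\vdash\Box^n\bot$ for all $n\ge1$, and $\Lambda\vdash\Diamond^{\le n}\Box\bot$ for some $n\ge 1$.
   Context: A normal modal logic is a set of modal formulas containing all propositional tautologies, the axiom $\Box(\phi\to\psi)\to(\Box\phi\to\Box\psi)$ and $\Diamond\phi\leftrightarrow\neg\Box\neg\phi$, and closed under modus ponens, uniform substitution and necessitation; $\Lambda\vdash\phi$ means $\phi\in\Lambda$; $\Lambda$ is consistent if $\bot\notin\Lambda$. $F_\circ$ is the Kripke frame consisting of a single reflexive world; $F_\bullet$ is the Kripke frame consisting of a single irreflexive world; $F\models\Lambda$ means every formula of $\Lambda$ is valid on $F$. $\Box^0\phi=\phi$, $\Box^{k+1}\phi=\Box\Box^k\phi$, similarly for $\Diamond^k$, and $\Diamond^{\le n}\phi=\bigvee_{k\le n}\Diamond^k\phi$. *)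

theory Defs
  imports Main
begin

datatype fm = Var nat | Bot | Imp fm fm | Box fm | Dia fm

definition Neg :: "fm \<Rightarrow> fm" where "Neg a = Imp a Bot"
definition Or :: "fm \<Rightarrow> fm \<Rightarrow> fm" where "Or a b = Imp (Neg a) b"
definition And :: "fm \<Rightarrow> fm \<Rightarrow> fm" where "And a b = Neg (Imp a (Neg b))"
definition Iff :: "fm \<Rightarrow> fm \<Rightarrow> fm" where "Iff a b = And (Imp a b) (Imp b a)"

text \<open>Propositional evaluation: variables and modal formulas are treated as atoms.\<close>
fun peval :: "(fm \<Rightarrow> bool) \<Rightarrow> fm \<Rightarrow> bool" where
  "peval v (Var p) = v (Var p)"
| "peval v Bot = False"
| "peval v (Imp a b) = (peval v a \<longrightarrow> peval v b)"
| "peval v (Box a) = v (Box a)"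
| "peval v (Dia a) = v (Dia a)"

definition tautology :: "fm \<Rightarrow> bool" where
  "tautology a \<longleftrightarrow> (\<forall>v. peval v a)"

fun subst :: "(nat \<Rightarrow> fm) \<Rightarrow> fm \<Rightarrow> fm" where
  "subst s (Var p) = s p"
| "subst s Bot = Bot"
| "subst s (Imp a b) = Imp (subst s a) (subst s b)"
| "subst s (Box a) = Box (subst s a)"
| "subst s (Dia a) = Dia (subst s a)"

definition normal_logic :: "fm set \<Rightarrow> bool" where
  "normal_logic L \<longleftrightarrow>
     (\<forall>a. tautology a \<longrightarrow> a \<in> L)
   \<and> (\<forall>a b. Imp (Box (Imp a b)) (Imp (Box a) (Box b)) \<in> L)
   \<and> (\<forall>a. Iff (Dia a) (Neg (Box (Neg a))) \<in> L)
   \<and> (\<forall>a b. a \<in> L \<longrightarrow> Imp a b \<in> L \<longrightarrow> b \<in> L)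
   \<and> (\<forall>a s. a \<in> L \<longrightarrow> subst s a \<in> L)
   \<and> (\<forall>a. a \<in> L \<longrightarrow> Box a \<in> L)"

definition consistent :: "fm set \<Rightarrow> bool" where
  "consistent L \<longleftrightarrow> Bot \<notin> L"

fun sat :: "('w \<Rightarrow> 'w \<Rightarrow> bool) \<Rightarrow> ('w \<Rightarrow> nat \<Rightarrow> bool) \<Rightarrow> 'w \<Rightarrow> fm \<Rightarrow> bool" where
  "sat R V w (Var p) = V w p"
| "sat R V w Bot = False"
| "sat R V w (Imp a b) = (sat R V w a \<longrightarrow> sat R V w b)"
| "sat R V w (Box a) = (\<forall>u. R w u \<longrightarrow> sat R V u a)"
| "sat R V w (Dia a) = (\<exists>u. R w u \<and> sat R V u a)"

definition valid_frame :: "('w \<Rightarrow> 'w \<Rightarrow> bool) \<Rightarrow> fm \<Rightarrow> bool" where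
  "valid_frame R a \<longleftrightarrow> (\<forall>V w. sat R V w a)"

definition frame_models :: "('w \<Rightarrow> 'w \<Rightarrow> bool) \<Rightarrow> fm set \<Rightarrow> bool" where
  "frame_models R L \<longleftrightarrow> (\<forall>a\<in>L. valid_frame R a)"

text \<open>F_circ: a single reflexive world; F_bullet: a single irreflexive world.\<close>
definition F_refl :: "unit \<Rightarrow> unit \<Rightarrow> bool" where "F_refl = (\<lambda>_ _. True)"
definition F_irr :: "unit \<Rightarrow> unit \<Rightarrow> bool" where "F_irr = (\<lambda>_ _. False)"

definition boxes :: "nat \<Rightarrow> fm \<Rightarrow> fm" where "boxes n a = (Box ^^ n) a"
definition dias :: "nat \<Rightarrow> fm \<Rightarrow> fm" where "dias n a = (Dia ^^ n) a"

fun dias_le :: "nat \<Rightarrow> fm \<Rightarrow> fm" where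
  "dias_le 0 a = a"
| "dias_le (Suc n) a = Or (dias_le n a) (dias (Suc n) a)"

end

theory Submission
  imports Defs
begin

lemma nl_parts1: "normal_logic L \<Longrightarrow> \<forall>a. tautology a \<longrightarrow> a \<in> L"
  by (unfold normal_logic_def, elim conjE, assumption)
lemma nl_parts2: "normal_logic L \<Longrightarrow> \<forall>a b. Imp (Box (Imp a b)) (Imp (Box a) (Box b)) \<in> L"
  by (unfold normal_logic_def, elim conjE, assumption)
lemma nl_parts3: "normal_logic L \<Longrightarrow> \<forall>a. Iff (Dia a) (Neg (Box (Neg a))) \<in> L"
  by (unfold normal_logic_def, elim conjE, assumption)
lemma nl_parts4: "normal_logic L \<Longrightarrow> \<forall>a b. a \<in> L \<longrightarrow> Imp a b \<in> L \<longrightarrow> b \<in> L"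
  by (unfold normal_logic_def, elim conjE, assumption)
lemma nl_parts5: "normal_logic L \<Longrightarrow> \<forall>a s. a \<in> L \<longrightarrow> subst s a \<in> L"
  by (unfold normal_logic_def, elim conjE, assumption)
lemma nl_parts6: "normal_logic L \<Longrightarrow> \<forall>a. a \<in> L \<longrightarrow> Box a \<in> L"
  by (unfold normal_logic_def, elim conjE, assumption)

lemma nl_taut: "normal_logic L \<Longrightarrow> tautology a \<Longrightarrow> a \<in> L"
  using nl_parts1 by metis
lemma nl_mp: "normal_logic L \<Longrightarrow> a \<in> L \<Longrightarrow> Imp a b \<in> L \<Longrightarrow> b \<in> L"
  using nl_parts4 by metis
lemma nl_K: "normal_logic L \<Longrightarrow> Imp (Box (Imp a b)) (Imp (Box a) (Box b)) \<in> L"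
  using nl_parts2 by metis
lemma nl_dual: "normal_logic L \<Longrightarrow> Iff (Dia a) (Neg (Box (Neg a))) \<in> L"
  using nl_parts3 by metis
lemma nl_nec: "normal_logic L \<Longrightarrow> a \<in> L \<Longrightarrow> Box a \<in> L"
  using nl_parts6 by metis
lemma subst_in: "normal_logic L \<Longrightarrow> a \<in> L \<Longrightarrow> subst s a \<in> L"
  using nl_parts5 by metis

lemma peval_foldr: "peval v (foldr Imp ps c) = ((\<forall>q\<in>set ps. peval v q) \<longrightarrow> peval v c)"
  by (induction ps) auto

lemma nl_prems: "normal_logic L \<Longrightarrow> set ps \<subseteq> L \<Longrightarrow> tautology (foldr Imp ps c) \<Longrightarrow> c \<in> L"
proof (induction ps arbitrary: c)
  case Nil
  then show ?case using nl_taut[OF Nil.prems(1)] by simp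
next
  case (Cons p ps)
  have t: "tautology (foldr Imp ps (Imp p c))"
    using Cons.prems(3) unfolding tautology_def peval_foldr by simp
  have s: "set ps \<subseteq> L" using Cons.prems(2) by simp
  have pc: "Imp p c \<in> L" by (rule Cons.IH[OF Cons.prems(1) s t])
  have p: "p \<in> L" using Cons.prems(2) by simp
  show ?case by (rule nl_mp[OF Cons.prems(1) p pc])
qed

lemma box_mono: "normal_logic L \<Longrightarrow> Imp a b \<in> L \<Longrightarrow> Imp (Box a) (Box b) \<in> L"
  using nl_nec nl_K nl_mp by blast

lemmas tsimps = tautology_def Or_def Neg_def And_def Iff_def

fun closed :: "fm \<Rightarrow> bool" where
  "closed (Var p) = False"
| "closed Bot = True"
| "closed (Imp a b) = (closed a \<and> closed b)"
| "closed (Box a) = closed a"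
| "closed (Dia a) = closed a"

fun depth :: "fm \<Rightarrow> nat" where
  "depth (Var p) = 0"
| "depth Bot = 0"
| "depth (Imp a b) = max (depth a) (depth b)"
| "depth (Box a) = Suc (depth a)"
| "depth (Dia a) = Suc (depth a)"

fun rv :: "fm \<Rightarrow> bool" where
  "rv (Var p) = False"
| "rv Bot = False"
| "rv (Imp a b) = (rv a \<longrightarrow> rv b)"
| "rv (Box a) = rv a"
| "rv (Dia a) = rv a"

fun iv :: "fm \<Rightarrow> bool" where
  "iv (Var p) = False"
| "iv Bot = False"
| "iv (Imp a b) = (iv a \<longrightarrow> iv b)"
| "iv (Box a) = True"
| "iv (Dia a) = False"

fun E :: "nat \<Rightarrow> fm" where
  "E 0 = Bot"
| "E (Suc m) = Or (Box Bot) (Dia (E m))"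

definition sg :: "bool \<Rightarrow> fm \<Rightarrow> fm" where "sg c x = (if c then x else Neg x)"

lemma box_pos:
  assumes L: "normal_logic L" and h: "Or (E m) b \<in> L"
  shows "Or (E (Suc m)) (Box b) \<in> L"
proof -
  have "Imp (Box (Neg (E m))) (Box b) \<in> L"
    using box_mono[OF L] h by (simp add: Or_def)
  moreover have "Iff (Dia (E m)) (Neg (Box (Neg (E m)))) \<in> L" using nl_dual[OF L] .
  ultimately show ?thesis
    by (intro nl_prems[OF L, of "[Imp (Box (Neg (E m))) (Box b), Iff (Dia (E m)) (Neg (Box (Neg (E m))))]"]; (simp add: tsimps peval_foldr)?; blast?)
qed

lemma box_neg:
  assumes L: "normal_logic L" and h: "Or (E m) (Neg b) \<in> L"
  shows "Or (E (Suc m)) (Neg (Box b)) \<in> L"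
proof -
  have 1: "Imp (Box (Neg (E m))) (Box (Neg b)) \<in> L"
    using box_mono[OF L] h by (simp add: Or_def)
  have 2: "Iff (Dia (E m)) (Neg (Box (Neg (E m)))) \<in> L" using nl_dual[OF L] .
  have 3: "Imp (Box b) (Box (Imp (Neg b) Bot)) \<in> L"
    by (rule box_mono[OF L], rule nl_taut[OF L]) (simp add: tsimps)
  have 4: "Imp (Box (Imp (Neg b) Bot)) (Imp (Box (Neg b)) (Box Bot)) \<in> L" using nl_K[OF L] .
  show ?thesis
    using 1 2 3 4
    by (intro nl_prems[OF L, of "[Imp (Box (Neg (E m))) (Box (Neg b)), Iff (Dia (E m)) (Neg (Box (Neg (E m)))),
       Imp (Box b) (Box (Imp (Neg b) Bot)), Imp (Box (Imp (Neg b) Bot)) (Imp (Box (Neg b)) (Box Bot))]"]; (simp add: tsimps peval_foldr)?; blast?)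
qed

lemma refl_main:
  assumes L: "normal_logic L"
  shows "closed x \<Longrightarrow> depth x \<le> m \<Longrightarrow> Or (E m) (sg (rv x) x) \<in> L"
proof (induction x arbitrary: m)
  case (Var x)
  then show ?case by simp
next
  case Bot
  then show ?case by (intro nl_taut[OF L]) (simp add: tsimps sg_def)
next
  case (Imp a b)
  then have ha: "Or (E m) (sg (rv a) a) \<in> L" and hb: "Or (E m) (sg (rv b) b) \<in> L" by auto
  show ?case using ha hb
    by (intro nl_prems[OF L, of "[Or (E m) (sg (rv a) a), Or (E m) (sg (rv b) b)]"]; (simp add: tsimps sg_def peval_foldr)?; blast?)
next
  case (Box a)
  then obtain m' where m: "m = Suc m'" and d: "depth a \<le> m'" by (cases m) auto
  have h: "Or (E m') (sg (rv a) a) \<in> L" using Box d by auto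
  show ?case
  proof (cases "rv a")
    case True
    then show ?thesis using box_pos[OF L] h m by (simp add: sg_def)
  next
    case False
    then show ?thesis using box_neg[OF L] h m by (simp add: sg_def)
  qed
next
  case (Dia a)
  then obtain m' where m: "m = Suc m'" and d: "depth a \<le> m'" by (cases m) auto
  have h: "Or (E m') (sg (rv a) a) \<in> L" using Dia d by auto
  have du: "Iff (Dia a) (Neg (Box (Neg a))) \<in> L" using nl_dual[OF L] .
  show ?case
  proof (cases "rv a")
    case True
    then have "Or (E m') (Neg (Neg a)) \<in> L" using h
      by (intro nl_prems[OF L, of "[Or (E m') a]"]; (simp add: tsimps sg_def peval_foldr)?; blast?)
    then have "Or (E m) (Neg (Box (Neg a))) \<in> L" using box_neg[OF L] m by simp
    then show ?thesis using du True
      by (intro nl_prems[OF L, of "[Or (E m) (Neg (Box (Neg a))), Iff (Dia a) (Neg (Box (Neg a)))]"]; (simp add: tsimps sg_def peval_foldr)?; blast?)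
  next
    case False
    then have "Or (E m) (Box (Neg a)) \<in> L" using box_pos[OF L] h m by (simp add: sg_def)
    then show ?thesis using du False
      by (intro nl_prems[OF L, of "[Or (E m) (Box (Neg a)), Iff (Dia a) (Neg (Box (Neg a)))]"]; (simp add: tsimps sg_def peval_foldr)?; blast?)
  qed
qed

lemma irr_main:
  assumes L: "normal_logic L"
  shows "closed x \<Longrightarrow> Imp (Box Bot) (sg (iv x) x) \<in> L"
proof (induction x)
  case (Var x)
  then show ?case by simp
next
  case Bot
  then show ?case by (intro nl_taut[OF L]) (simp add: tsimps sg_def)
next
  case (Imp a b)
  then have ha: "Imp (Box Bot) (sg (iv a) a) \<in> L" and hb: "Imp (Box Bot) (sg (iv b) b) \<in> L" by auto
  show ?case using ha hb
    by (intro nl_prems[OF L, of "[Imp (Box Bot) (sg (iv a) a), Imp (Box Bot) (sg (iv b) b)]"]; (simp add: tsimps sg_def peval_foldr)?; blast?)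
next
  case (Box a)
  show ?case
    by (simp add: sg_def, rule box_mono[OF L], rule nl_taut[OF L]) (simp add: tsimps)
next
  case (Dia a)
  have 1: "Imp (Box Bot) (Box (Neg a)) \<in> L"
    by (rule box_mono[OF L], rule nl_taut[OF L]) (simp add: tsimps)
  have du: "Iff (Dia a) (Neg (Box (Neg a))) \<in> L" using nl_dual[OF L] .
  show ?case using 1 du
    by (intro nl_prems[OF L, of "[Imp (Box Bot) (Box (Neg a)), Iff (Dia a) (Neg (Box (Neg a)))]"]; (simp add: tsimps sg_def peval_foldr)?; blast?)
qed

definition sV :: "(unit \<Rightarrow> nat \<Rightarrow> bool) \<Rightarrow> nat \<Rightarrow> fm" where
  "sV V p = (if V () p then Neg Bot else Bot)"

lemma closed_subst: "closed (subst (sV V) a)"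
  by (induction a) (auto simp: sV_def Neg_def)

lemma rv_subst: "rv (subst (sV V) a) = sat F_refl V () a"
  by (induction a) (auto simp: sV_def Neg_def F_refl_def)

lemma iv_subst: "iv (subst (sV V) a) = sat F_irr V () a"
  by (induction a) (auto simp: sV_def Neg_def F_irr_def)

lemma negE:
  assumes L: "normal_logic L" and h: "Neg (Box Bot) \<in> L"
  shows "Neg (E m) \<in> L"
proof (induction m)
  case 0
  then show ?case by (simp, intro nl_taut[OF L]) (simp add: tsimps)
next
  case (Suc m)
  have 1: "Box (Neg (E m)) \<in> L" using nl_nec[OF L Suc] .
  have du: "Iff (Dia (E m)) (Neg (Box (Neg (E m)))) \<in> L" using nl_dual[OF L] .
  show ?case using 1 du h
    by (simp, (intro nl_prems[OF L, of "[Box (Neg (E m)), Iff (Dia (E m)) (Neg (Box (Neg (E m)))), Neg (Box Bot)]"]; (simp add: tsimps peval_foldr)?; blast?))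
qed

lemma dia_mono:
  assumes L: "normal_logic L" and h: "Imp a b \<in> L"
  shows "Imp (Dia a) (Dia b) \<in> L"
proof -
  have "Imp (Neg b) (Neg a) \<in> L" using h
    by (intro nl_prems[OF L, of "[Imp a b]"]; (simp add: tsimps peval_foldr)?; blast?)
  then have 1: "Imp (Box (Neg b)) (Box (Neg a)) \<in> L" using box_mono[OF L] by blast
  have da: "Iff (Dia a) (Neg (Box (Neg a))) \<in> L" using nl_dual[OF L] .
  have db: "Iff (Dia b) (Neg (Box (Neg b))) \<in> L" using nl_dual[OF L] .
  show ?thesis using 1 da db
    by (intro nl_prems[OF L, of "[Imp (Box (Neg b)) (Box (Neg a)), Iff (Dia a) (Neg (Box (Neg a))), Iff (Dia b) (Neg (Box (Neg b)))]"]; (simp add: tsimps peval_foldr)?; blast?)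
qed

lemma dia_or:
  assumes L: "normal_logic L"
  shows "Imp (Dia (Or a b)) (Or (Dia a) (Dia b)) \<in> L"
proof -
  have 1: "Imp (Box (Neg a)) (Box (Imp (Neg b) (Neg (Or a b)))) \<in> L"
    by (rule box_mono[OF L], rule nl_taut[OF L]) (simp add: tsimps)
  have 2: "Imp (Box (Imp (Neg b) (Neg (Or a b)))) (Imp (Box (Neg b)) (Box (Neg (Or a b)))) \<in> L"
    using nl_K[OF L] .
  have da: "Iff (Dia a) (Neg (Box (Neg a))) \<in> L" using nl_dual[OF L] .
  have db: "Iff (Dia b) (Neg (Box (Neg b))) \<in> L" using nl_dual[OF L] .
  have dab: "Iff (Dia (Or a b)) (Neg (Box (Neg (Or a b)))) \<in> L" using nl_dual[OF L] .
  show ?thesis using 1 2 da db dab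
    by (intro nl_prems[OF L, of "[Imp (Box (Neg a)) (Box (Imp (Neg b) (Neg (Or a b)))),
       Imp (Box (Imp (Neg b) (Neg (Or a b)))) (Imp (Box (Neg b)) (Box (Neg (Or a b)))),
       Iff (Dia a) (Neg (Box (Neg a))), Iff (Dia b) (Neg (Box (Neg b))),
       Iff (Dia (Or a b)) (Neg (Box (Neg (Or a b))))]"]; (simp add: tsimps peval_foldr)?; blast?)
qed

lemma dias_Suc: "dias (Suc k) a = Dia (dias k a)"
  by (simp add: dias_def)

lemma dias_le_base: "tautology (Imp a (dias_le n a))"
  by (induction n) (auto simp: tsimps)

lemma dias_le_step: "tautology (Imp (dias_le n a) (dias_le (Suc n) a))"
  by (auto simp: tsimps)

lemma dia_D:
  assumes L: "normal_logic L"
  shows "Imp (Dia (dias_le n a)) (dias_le (Suc n) a) \<in> L"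
proof (induction n)
  case 0
  then show ?case by (intro nl_taut[OF L]) (simp add: tsimps dias_def)
next
  case (Suc n)
  have 1: "Imp (Dia (dias_le (Suc n) a)) (Or (Dia (dias_le n a)) (Dia (dias (Suc n) a))) \<in> L"
    using dia_or[OF L] by simp
  show ?case using 1 Suc
    by (intro nl_prems[OF L, of "[Imp (Dia (dias_le (Suc n) a)) (Or (Dia (dias_le n a)) (Dia (dias (Suc n) a))),
         Imp (Dia (dias_le n a)) (dias_le (Suc n) a)]"]; (simp add: tsimps dias_Suc peval_foldr)?; blast?)
qed

lemma E_D:
  assumes L: "normal_logic L"
  shows "Imp (E (Suc n)) (dias_le n (Box Bot)) \<in> L"
proof (induction n)
  case 0
  have "Box (Neg Bot) \<in> L" by (rule nl_nec[OF L], rule nl_taut[OF L]) (simp add: tsimps)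
  moreover have "Iff (Dia Bot) (Neg (Box (Neg Bot))) \<in> L" using nl_dual[OF L] .
  ultimately show ?case
    by (intro nl_prems[OF L, of "[Box (Neg Bot), Iff (Dia Bot) (Neg (Box (Neg Bot)))]"]; (simp add: tsimps peval_foldr)?; blast?)
next
  case (Suc n)
  have 1: "Imp (Dia (E (Suc n))) (Dia (dias_le n (Box Bot))) \<in> L" using dia_mono[OF L Suc] .
  have 2: "Imp (Dia (dias_le n (Box Bot))) (dias_le (Suc n) (Box Bot)) \<in> L" using dia_D[OF L] .
  have 3: "Imp (Box Bot) (dias_le (Suc n) (Box Bot)) \<in> L" using nl_taut[OF L dias_le_base] .
  have "Imp (Or (Box Bot) (Dia (E (Suc n)))) (dias_le (Suc n) (Box Bot)) \<in> L" using 1 2 3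
    by (intro nl_prems[OF L, of "[Imp (Dia (E (Suc n))) (Dia (dias_le n (Box Bot))),
       Imp (Dia (dias_le n (Box Bot))) (dias_le (Suc n) (Box Bot)), Imp (Box Bot) (dias_le (Suc n) (Box Bot))]"]; (simp add: tsimps peval_foldr)?; blast?)
  then show ?case by simp
qed

lemma refl_boxes: "sat F_refl V () (boxes n Bot) = False"
  by (induction n) (auto simp: boxes_def F_refl_def)

lemma refl_dias: "sat F_refl V () (dias k (Box Bot)) = False"
  by (induction k) (auto simp: dias_def F_refl_def)

lemma refl_dias_le: "sat F_refl V () (dias_le n (Box Bot)) = False"
  by (induction n) (simp_all add: refl_dias Or_def Neg_def del: sat.simps(4), simp add: F_refl_def)

theorem theorem4p13:
  fixes L :: "fm set"
  assumes "normal_logic L" and "consistent L"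
  defines "TA \<equiv> frame_models F_refl L"
      and "TB \<equiv> frame_models F_irr L \<and> (\<exists>n\<ge>1. boxes n Bot \<in> L)"
      and "TC \<equiv> frame_models F_irr L \<and> (\<forall>n\<ge>1. boxes n Bot \<notin> L)
                 \<and> (\<exists>n\<ge>1. dias_le n (Box Bot) \<in> L)"
  shows "(TA \<and> \<not> TB \<and> \<not> TC) \<or> (\<not> TA \<and> TB \<and> \<not> TC) \<or> (\<not> TA \<and> \<not> TB \<and> TC)"
proof -
  note L = assms(1)
  have BotL: "Bot \<notin> L" using assms(2) by (simp add: consistent_def)
  have A1: "\<not> TB" if "TA"
  proof
    assume "TB"
    then obtain n where "boxes n Bot \<in> L" by (auto simp: TB_def)
    with that show False
      by (auto simp: TA_def frame_models_def valid_frame_def refl_boxes)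
  qed
  have A2: "\<not> TC" if "TA"
  proof
    assume "TC"
    then obtain n where "dias_le n (Box Bot) \<in> L" by (auto simp: TC_def)
    with that show False
      by (auto simp: TA_def frame_models_def valid_frame_def refl_dias_le)
  qed
  have BC: "\<not> (TB \<and> TC)" by (auto simp: TB_def TC_def)
  have notA: "frame_models F_irr L \<and> (\<exists>m\<ge>1. E m \<in> L)" if "\<not> TA"
  proof -
    from that obtain a V where aL: "a \<in> L" and na: "\<not> sat F_refl V () a"
      by (auto simp: TA_def frame_models_def valid_frame_def)
    let ?x = "subst (sV V) a"
    have xL: "?x \<in> L" using subst_in[OF L aL] .
    have "Or (E (depth ?x)) (sg (rv ?x) ?x) \<in> L"
      using refl_main[OF L closed_subst] by simp
    then have "Or (E (depth ?x)) (Neg ?x) \<in> L" using na by (simp add: rv_subst sg_def)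
    then have EL: "E (depth ?x) \<in> L" using xL
      by (intro nl_prems[OF L, of "[Or (E (depth ?x)) (Neg ?x), ?x]"]; (simp add: tsimps peval_foldr)?; blast?)
    have m1: "depth ?x \<ge> 1"
    proof (rule ccontr)
      assume "\<not> depth ?x \<ge> 1"
      then have "depth ?x = 0" by simp
      with EL BotL show False by simp
    qed
    have FI: "frame_models F_irr L"
    proof (rule ccontr)
      assume "\<not> frame_models F_irr L"
      then obtain b W where bL: "b \<in> L" and nb: "\<not> sat F_irr W () b"
        by (auto simp: frame_models_def valid_frame_def)
      let ?y = "subst (sV W) b"
      have yL: "?y \<in> L" using subst_in[OF L bL] .
      have "Imp (Box Bot) (sg (iv ?y) ?y) \<in> L" using irr_main[OF L closed_subst] .
      then have "Imp (Box Bot) (Neg ?y) \<in> L" using nb by (simp add: iv_subst sg_def)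
      then have "Neg (Box Bot) \<in> L" using yL
        by (intro nl_prems[OF L, of "[Imp (Box Bot) (Neg ?y), ?y]"]; (simp add: tsimps peval_foldr)?; blast?)
      then have NE: "Neg (E (depth ?x)) \<in> L" by (rule negE[OF L])
      then have "Bot \<in> L" using nl_mp[OF L EL, of Bot] by (simp add: Neg_def)
      with BotL show False by simp
    qed
    show ?thesis using FI EL m1 by blast
  qed
  have notA2: "TB \<or> TC" if nA: "\<not> TA"
  proof (cases "\<exists>n\<ge>1. boxes n Bot \<in> L")
    case True
    then show ?thesis using notA[OF nA] by (auto simp: TB_def)
  next
    case False
    obtain m where m: "m \<ge> 1" "E m \<in> L" using notA[OF nA] by blast
    then obtain n where n: "m = Suc n" by (cases m) auto
    have "dias_le n (Box Bot) \<in> L" using nl_mp[OF L _ E_D[OF L, of n]] m(2) n by simp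
    then have "dias_le (Suc n) (Box Bot) \<in> L"
      by (rule nl_mp[OF L _ nl_taut[OF L dias_le_step]])
    then show ?thesis using notA[OF nA] False by (auto simp: TC_def)
  qed
  show ?thesis using A1 A2 BC notA2 by blast
qed

end
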